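(* Consider an instance of the Steiner Team Orienteering Problem as described in the context, and the linear programs $\mathcal{L}_1$ and $\mathcal{L}_2$ defined there. Then $\mathcal{L}_1$ and $\mathcal{L}_2$ are equivalent: for every feasible solution $(x,y,z,\varphi)$ of $\mathcal{L}_1$ there is a feasible solution $(x,y,f,\varphi)$ of $\mathcal{L}_2$ with the same $(x,y,\varphi)$ (hence the same objective value $\sum_{i\in P}p_iy_i$), and for every feasible solution $(x,y,f,\varphi)$ of $\mathcal{L}_2$ there is a feasible solution $(x,y,z,\varphi)$ of $\mathcal{L}_1$ with the same $(x,y,\varphi)$. In particular $\mathcal{L}_1$ and $\mathcal{L}_2$ have the same optimal value.
   Context: An instance of the Steiner Team Orienteering Problem (STOP) consists of: a digraph $G=(N,A)$; an origin $s\in N$ and a destination $t\in N$ with $s\neq t$; disjoint sets $S,P\subseteq N\setminus\{s,t\}$ (mandatory and profitable vertices) with $N=S\cup P\cup\{s,t\}$; rewards $p_i\in\mathbb{Z}^+$ for $i\in P$; traverse times $d_{ij}\in\mathbb{R}^+$ for $(i,j)\in A$; a number $m$ of vehicles and a time limit $T$. For $i\in N$ let $\delta^+(i)=\{j\in N:(i,j)\in A\}$ and $\delta^-(i)=\{j\in N:(j,i)\in A\}$. For $i,j\in N$, $R_{ij}$ denotes the minimum of $\sum_{a\in A_p}d_a$ over all paths $p$ from $i$ to $j$ in $G$ (with arc set $A_p$), and $R_{ii}=0$. Common constraints (C) on variables $x\in\mathbb{R}^A$, $y\in\mathbb{R}^N$, $\varphi\in\mathbb{R}$: (C1) $y_i=1$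 for all $i\in S\cup\{s,t\}$; (C2) $\sum_{j\in\delta^+(i)}x_{ij}=y_i$ for all $i\in S\cup P$; (C3) $\sum_{j\in\delta^+(s)}x_{sj}=\sum_{i\in\delta^-(t)}x_{it}=m-\varphi$; (C4) $\sum_{i\in\delta^-(s)}x_{is}=\sum_{j\in\delta^+(t)}x_{tj}=0$; (C5) $\sum_{j\in\delta^+(i)}x_{ij}-\sum_{j\in\delta^-(i)}x_{ji}=0$ for all $i\in S\cup P$; and $0\le\varphi\le m$. Formulation $\mathcal{F}_1$: maximize $\sum_{i\in P}p_iy_i$ over $(x,y,z,\varphi)$, $z\in\mathbb{R}^A$, subject to (C); $z_{sj}=d_{sj}x_{sj}$ for all $j\in\delta^+(s)$; $\sum_{j\in\delta^+(i)}z_{ij}-\sum_{j\in\delta^-(i)}z_{ji}=\sum_{j\in\delta^+(i)}d_{ij}x_{ij}$ for all $i\in S\cup P$; $z_{ij}\le(T-R_{jt})x_{ij}$ and $z_{ij}\ge(R_{si}+d_{ij})x_{ij}$ for all $(i,j)\in A$; $x\in\{0,1\}^A$, $y\in\{0,1\}^N$, $z\ge0$. Formulation $\mathcal{F}_2$: maximize $\sum_{i\in P}p_iy_i$ over $(x,y,f,\varphi)$, $f\in\mathbb{R}^A$, subject to (C); $f_{sj}=(T-d_{sj})x_{sj}$ for all $j\in\delta^+(s)$; $\sum_{j\in\delta^-(i)}f_{ji}-\sum_{j\in\delta^+(i)}f_{ij}=\sum_{j\in\delta^+(i)}d_{ij}x_{ij}$ for all $i\in S\cup P$; $f_{ij}\le(T-R_{si}-d_{ij})x_{ij}$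 for all $(i,j)\in A$ with $i\neq s$; $f_{ij}\ge R_{jt}x_{ij}$ for all $(i,j)\in A$; $x\in\{0,1\}^A$, $y\in\{0,1\}^N$, $f\ge0$. $\mathcal{L}_1$ and $\mathcal{L}_2$ are the linear relaxations of $\mathcal{F}_1$ and $\mathcal{F}_2$, obtained by replacing $x\in\{0,1\}^A$, $y\in\{0,1\}^N$ with $0\le x\le 1$, $0\le y\le 1$. *)

theory Defs
  imports Complex_Main
begin

definition out_nbrs :: "'a set \<Rightarrow> ('a \<times> 'a) set \<Rightarrow> 'a \<Rightarrow> 'a set" where
  "out_nbrs N A i = {j \<in> N. (i, j) \<in> A}"

definition in_nbrs :: "'a set \<Rightarrow> ('a \<times> 'a) set \<Rightarrow> 'a \<Rightarrow> 'a set" where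
  "in_nbrs N A i = {j \<in> N. (j, i) \<in> A}"

definition is_path :: "('a \<times> 'a) set \<Rightarrow> 'a \<Rightarrow> 'a \<Rightarrow> 'a list \<Rightarrow> bool" where
  "is_path A i j vs \<longleftrightarrow> vs \<noteq> [] \<and> hd vs = i \<and> last vs = j \<and> distinct vs \<and>
     (\<forall>k. Suc k < length vs \<longrightarrow> (vs ! k, vs ! Suc k) \<in> A)"

definition path_len :: "('a \<Rightarrow> 'a \<Rightarrow> real) \<Rightarrow> 'a list \<Rightarrow> real" where
  "path_len d vs = (\<Sum>k<length vs - 1. d (vs ! k) (vs ! Suc k))"

definition R :: "('a \<times> 'a) set \<Rightarrow> ('a \<Rightarrow> 'a \<Rightarrow> real) \<Rightarrow> 'a \<Rightarrow> 'a \<Rightarrow> real" where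
  "R A d i j = (if i = j then 0 else Inf {path_len d vs | vs. is_path A i j vs})"

definition stop_instance ::
  "'a set \<Rightarrow> ('a \<times> 'a) set \<Rightarrow> 'a \<Rightarrow> 'a \<Rightarrow> 'a set \<Rightarrow> 'a set \<Rightarrow> ('a \<Rightarrow> int)
   \<Rightarrow> ('a \<Rightarrow> 'a \<Rightarrow> real) \<Rightarrow> nat \<Rightarrow> real \<Rightarrow> bool" where
  "stop_instance N A s t S P p d m T \<longleftrightarrow>
     finite N \<and> A \<subseteq> N \<times> N \<and> s \<in> N \<and> t \<in> N \<and> s \<noteq> t \<and>
     S \<subseteq> N - {s, t} \<and> P \<subseteq> N - {s, t} \<and> S \<inter> P = {} \<and> N = S \<union> P \<union> {s, t} \<and>
     (\<forall>i\<in>P. p i > 0) \<and> (\<forall>(i, j)\<in>A. d i j > 0)"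

definition common_C ::
  "'a set \<Rightarrow> ('a \<times> 'a) set \<Rightarrow> 'a \<Rightarrow> 'a \<Rightarrow> 'a set \<Rightarrow> 'a set \<Rightarrow> nat
   \<Rightarrow> ('a \<Rightarrow> 'a \<Rightarrow> real) \<Rightarrow> ('a \<Rightarrow> real) \<Rightarrow> real \<Rightarrow> bool" where
  "common_C N A s t S P m x y \<phi> \<longleftrightarrow>
     (\<forall>i \<in> S \<union> {s, t}. y i = 1) \<and>
     (\<forall>i \<in> S \<union> P. (\<Sum>j\<in>out_nbrs N A i. x i j) = y i) \<and>
     (\<Sum>j\<in>out_nbrs N A s. x s j) = real m - \<phi> \<and>
     (\<Sum>i\<in>in_nbrs N A t. x i t) = real m - \<phi> \<and>
     (\<Sum>i\<in>in_nbrs N A s. x i s) = 0 \<and>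
     (\<Sum>j\<in>out_nbrs N A t. x t j) = 0 \<and>
     (\<forall>i \<in> S \<union> P. (\<Sum>j\<in>out_nbrs N A i. x i j) - (\<Sum>j\<in>in_nbrs N A i. x j i) = 0) \<and>
     0 \<le> \<phi> \<and> \<phi> \<le> real m"

definition L1_feasible ::
  "'a set \<Rightarrow> ('a \<times> 'a) set \<Rightarrow> 'a \<Rightarrow> 'a \<Rightarrow> 'a set \<Rightarrow> 'a set \<Rightarrow> ('a \<Rightarrow> 'a \<Rightarrow> real)
   \<Rightarrow> nat \<Rightarrow> real \<Rightarrow> ('a \<Rightarrow> 'a \<Rightarrow> real) \<Rightarrow> ('a \<Rightarrow> real) \<Rightarrow> ('a \<Rightarrow> 'a \<Rightarrow> real) \<Rightarrow> real \<Rightarrow> bool" where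
  "L1_feasible N A s t S P d m T x y z \<phi> \<longleftrightarrow>
     common_C N A s t S P m x y \<phi> \<and>
     (\<forall>j \<in> out_nbrs N A s. z s j = d s j * x s j) \<and>
     (\<forall>i \<in> S \<union> P. (\<Sum>j\<in>out_nbrs N A i. z i j) - (\<Sum>j\<in>in_nbrs N A i. z j i)
                    = (\<Sum>j\<in>out_nbrs N A i. d i j * x i j)) \<and>
     (\<forall>(i, j) \<in> A. z i j \<le> (T - R A d j t) * x i j) \<and>
     (\<forall>(i, j) \<in> A. z i j \<ge> (R A d s i + d i j) * x i j) \<and>
     (\<forall>(i, j) \<in> A. 0 \<le> x i j \<and> x i j \<le> 1) \<and>
     (\<forall>i \<in> N. 0 \<le> y i \<and> y i \<le> 1) \<and>
     (\<forall>(i, j) \<in> A. z i j \<ge> 0)"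

definition L2_feasible ::
  "'a set \<Rightarrow> ('a \<times> 'a) set \<Rightarrow> 'a \<Rightarrow> 'a \<Rightarrow> 'a set \<Rightarrow> 'a set \<Rightarrow> ('a \<Rightarrow> 'a \<Rightarrow> real)
   \<Rightarrow> nat \<Rightarrow> real \<Rightarrow> ('a \<Rightarrow> 'a \<Rightarrow> real) \<Rightarrow> ('a \<Rightarrow> real) \<Rightarrow> ('a \<Rightarrow> 'a \<Rightarrow> real) \<Rightarrow> real \<Rightarrow> bool" where
  "L2_feasible N A s t S P d m T x y f \<phi> \<longleftrightarrow>
     common_C N A s t S P m x y \<phi> \<and>
     (\<forall>j \<in> out_nbrs N A s. f s j = (T - d s j) * x s j) \<and>
     (\<forall>i \<in> S \<union> P. (\<Sum>j\<in>in_nbrs N A i. f j i) - (\<Sum>j\<in>out_nbrs N A i. f i j)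
                    = (\<Sum>j\<in>out_nbrs N A i. d i j * x i j)) \<and>
     (\<forall>(i, j) \<in> A. i \<noteq> s \<longrightarrow> f i j \<le> (T - R A d s i - d i j) * x i j) \<and>
     (\<forall>(i, j) \<in> A. f i j \<ge> R A d j t * x i j) \<and>
     (\<forall>(i, j) \<in> A. 0 \<le> x i j \<and> x i j \<le> 1) \<and>
     (\<forall>i \<in> N. 0 \<le> y i \<and> y i \<le> 1) \<and>
     (\<forall>(i, j) \<in> A. f i j \<ge> 0)"

definition objective :: "'a set \<Rightarrow> ('a \<Rightarrow> int) \<Rightarrow> ('a \<Rightarrow> real) \<Rightarrow> real" where
  "objective P p y = (\<Sum>i\<in>P. real_of_int (p i) * y i)"

end

theory Submission
  imports Defs
begin

lemma path_exists:
  assumes "(a, b) \<in> A\<^sup>*" "a \<noteq> b"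
  shows "\<exists>vs. is_path A a b vs"
  using assms
proof (induction rule: converse_rtrancl_induct)
  case base
  then show ?case by simp
next
  case (step a c)
  show ?case
  proof (cases "c = b")
    case True
    have "is_path A a b [a, b]"
      unfolding is_path_def
    proof (intro conjI allI impI)
      fix k assume "Suc k < length [a, b]"
      then have "k = 0" by simp
      then show "([a, b] ! k, [a, b] ! Suc k) \<in> A" using step True by simp
    qed (use step True in auto)
    then show ?thesis by blast
  next
    case False
    then obtain vs where vs: "is_path A c b vs" using step by blast
    show ?thesis
    proof (cases "a \<in> set vs")
      case True
      then obtain n where n: "n < length vs" "vs ! n = a" by (auto simp: in_set_conv_nth)
      have "is_path A a b (drop n vs)"
        unfolding is_path_def
      proof (intro conjI allI impI)
        show "drop n vs \<noteq> []" using n by simp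
        show "hd (drop n vs) = a" using n by (simp add: hd_drop_conv_nth)
        show "last (drop n vs) = b" using n vs by (simp add: is_path_def)
        show "distinct (drop n vs)" using vs by (simp add: is_path_def)
        fix k assume "Suc k < length (drop n vs)"
        then have "Suc (n + k) < length vs" by simp
        then have "(vs ! (n + k), vs ! Suc (n + k)) \<in> A" using vs by (simp add: is_path_def)
        then show "(drop n vs ! k, drop n vs ! Suc k) \<in> A" using n by simp
      qed
      then show ?thesis by blast
    next
      case False
      have "is_path A a b (a # vs)"
        unfolding is_path_def
      proof (intro conjI allI impI)
        show "a # vs \<noteq> []" by simp
        show "hd (a # vs) = a" by simp
        show "last (a # vs) = b" using vs by (simp add: is_path_def)
        show "distinct (a # vs)" using vs False by (simp add: is_path_def)
        fix k assume k: "Suc k < length (a # vs)"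
        show "((a # vs) ! k, (a # vs) ! Suc k) \<in> A"
        proof (cases k)
          case 0
          then show ?thesis using vs step(1) by (auto simp: is_path_def hd_conv_nth)
        next
          case (Suc k')
          then show ?thesis using vs k by (auto simp: is_path_def)
        qed
      qed
      then show ?thesis by blast
    qed
  qed
qed

lemma R_nonneg:
  assumes "(a, b) \<in> A\<^sup>*" "\<forall>(i, j)\<in>A. d i j > 0"
  shows "R A d a b \<ge> 0"
proof (cases "a = b")
  case True then show ?thesis by (simp add: R_def)
next
  case False
  then obtain vs where vs: "is_path A a b vs" using path_exists[OF assms(1) False] by blast
  have "0 \<le> Inf {path_len d vs | vs. is_path A a b vs}"
  proof (rule cInf_greatest)
    show "{path_len d vs | vs. is_path A a b vs} \<noteq> {}" using vs by blast
  next
    fix r assume "r \<in> {path_len d vs | vs. is_path A a b vs}"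
    then obtain ws where ws: "is_path A a b ws" "r = path_len d ws" by blast
    have "\<forall>k<length ws - 1. 0 \<le> d (ws ! k) (ws ! Suc k)"
    proof (intro allI impI)
      fix k assume "k < length ws - 1"
      then have "Suc k < length ws" by simp
      then have "(ws ! k, ws ! Suc k) \<in> A" using ws unfolding is_path_def by blast
      then have "0 < d (ws ! k) (ws ! Suc k)" using assms(2) by blast
      then show "0 \<le> d (ws ! k) (ws ! Suc k)" by simp
    qed
    then show "0 \<le> r" unfolding ws(2) path_len_def by (intro sum_nonneg) auto
  qed
  then show ?thesis using False by (simp add: R_def)
qed

lemma closed_flow:
  assumes finN: "finite N" and UN: "U \<subseteq> N" and AN: "A \<subseteq> N \<times> N"
    and nonneg: "\<forall>(k, l)\<in>A. g k l \<ge> (0::real)"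
    and closed: "\<forall>k\<in>U. \<forall>l. (k, l) \<in> A \<and> l \<notin> U \<longrightarrow> g k l = 0"
  shows "(\<Sum>k\<in>U. (\<Sum>l\<in>out_nbrs N A k. g k l) - (\<Sum>l\<in>in_nbrs N A k. g l k)) \<le> 0"
proof -
  have finU: "finite U" using finN UN finite_subset by blast
  have e1: "(\<Sum>l\<in>out_nbrs N A k. g k l) = (\<Sum>l\<in>U. if (k, l) \<in> A then g k l else 0)"
    if k: "k \<in> U" for k
  proof -
    have fo: "finite (out_nbrs N A k)" using finN by (simp add: out_nbrs_def)
    have sub: "{l\<in>U. (k, l) \<in> A} \<subseteq> out_nbrs N A k" using UN by (auto simp: out_nbrs_def)
    have "(\<Sum>l\<in>out_nbrs N A k. g k l) = (\<Sum>l\<in>{l\<in>U. (k, l) \<in> A}. g k l)"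
    proof (rule sum.mono_neutral_right[OF fo sub])
      show "\<forall>i\<in>out_nbrs N A k - {l \<in> U. (k, l) \<in> A}. g k i = 0"
        using closed k by (auto simp: out_nbrs_def)
    qed
    also have "\<dots> = (\<Sum>l\<in>U. if (k, l) \<in> A then g k l else 0)"
      using finU by (rule sum.inter_filter)
    finally show ?thesis .
  qed
  have e2: "(\<Sum>l\<in>in_nbrs N A k. g l k) \<ge> (\<Sum>l\<in>U. if (l, k) \<in> A then g l k else 0)"
    if k: "k \<in> U" for k
  proof -
    have fi: "finite (in_nbrs N A k)" using finN by (simp add: in_nbrs_def)
    have sub: "{l\<in>U. (l, k) \<in> A} \<subseteq> in_nbrs N A k" using UN by (auto simp: in_nbrs_def)
    have "(\<Sum>l\<in>U. if (l, k) \<in> A then g l k else 0) = (\<Sum>l\<in>{l\<in>U. (l, k) \<in> A}. g l k)"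
      using finU by (rule sum.inter_filter[symmetric])
    also have "\<dots> \<le> (\<Sum>l\<in>in_nbrs N A k. g l k)"
    proof (rule sum_mono2[OF fi sub])
      fix b assume "b \<in> in_nbrs N A k - {l \<in> U. (l, k) \<in> A}"
      then have "(b, k) \<in> A" by (simp add: in_nbrs_def)
      then show "0 \<le> g b k" using nonneg by blast
    qed
    finally show ?thesis .
  qed
  have "(\<Sum>k\<in>U. (\<Sum>l\<in>out_nbrs N A k. g k l) - (\<Sum>l\<in>in_nbrs N A k. g l k))
      \<le> (\<Sum>k\<in>U. (\<Sum>l\<in>U. if (k, l) \<in> A then g k l else 0) - (\<Sum>l\<in>U. if (l, k) \<in> A then g l k else 0))"
    by (rule sum_mono) (use e1 e2 in force)
  also have "\<dots> = (\<Sum>k\<in>U. \<Sum>l\<in>U. if (k, l) \<in> A then g k l else 0) - (\<Sum>k\<in>U. \<Sum>l\<in>U. if (l, k) \<in> A then g l k else 0)"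
    by (simp add: sum_subtractf)
  also have "(\<Sum>k\<in>U. \<Sum>l\<in>U. if (l, k) \<in> A then g l k else 0) = (\<Sum>k\<in>U. \<Sum>l\<in>U. if (k, l) \<in> A then g k l else 0)"
    by (rule sum.swap)
  finally show ?thesis by simp
qed

lemma inst_facts:
  assumes "stop_instance N A s t S P p d m T"
  shows "finite N" "A \<subseteq> N \<times> N" "s \<in> N" "t \<in> N" "s \<noteq> t" "N = S \<union> P \<union> {s, t}"
    "s \<notin> S \<union> P" "t \<notin> S \<union> P" "\<And>i j. (i, j) \<in> A \<Longrightarrow> d i j > 0"
  using assms unfolding stop_instance_def by blast+

lemma x_in_s_zero:
  assumes "finite N" "A \<subseteq> N \<times> N" "common_C N A s t S P m x y \<phi>"
    "\<And>i j. (i, j) \<in> A \<Longrightarrow> 0 \<le> x i j" "(l, s) \<in> A"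
  shows "x l s = 0"
proof -
  have fi: "finite (in_nbrs N A s)" using assms(1) by (simp add: in_nbrs_def)
  have "(\<Sum>i\<in>in_nbrs N A s. x i s) = 0" using assms(3) unfolding common_C_def by blast
  moreover have "l \<in> in_nbrs N A s" using assms(2,5) unfolding in_nbrs_def by blast
  moreover have "\<forall>i\<in>in_nbrs N A s. 0 \<le> x i s" using assms(4) by (simp add: in_nbrs_def)
  ultimately show ?thesis using sum_nonneg_eq_0_iff[OF fi, of "\<lambda>i. x i s"] by simp
qed

lemma x_out_t_zero:
  assumes "finite N" "A \<subseteq> N \<times> N" "common_C N A s t S P m x y \<phi>"
    "\<And>i j. (i, j) \<in> A \<Longrightarrow> 0 \<le> x i j" "(t, l) \<in> A"
  shows "x t l = 0"
proof -
  have fi: "finite (out_nbrs N A t)" using assms(1) by (simp add: out_nbrs_def)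
  have "(\<Sum>i\<in>out_nbrs N A t. x t i) = 0" using assms(3) unfolding common_C_def by blast
  moreover have "l \<in> out_nbrs N A t" using assms(2,5) unfolding out_nbrs_def by blast
  moreover have "\<forall>i\<in>out_nbrs N A t. 0 \<le> x t i" using assms(4) by (simp add: out_nbrs_def)
  ultimately show ?thesis using sum_nonneg_eq_0_iff[OF fi, of "\<lambda>i. x t i"] by simp
qed

lemma L1_reach:
  assumes inst: "stop_instance N A s t S P p d m T"
    and F: "L1_feasible N A s t S P d m T x y z \<phi>"
    and ij: "(i, j) \<in> A" and pos: "x i j > 0"
  shows "(j, t) \<in> A\<^sup>*"
proof (rule ccontr)
  assume nr: "(j, t) \<notin> A\<^sup>*"
  note I = inst_facts[OF inst]
  have C: "common_C N A s t S P m x y \<phi>" using F by (simp add: L1_feasible_def)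
  have xnn: "\<And>i j. (i, j) \<in> A \<Longrightarrow> 0 \<le> x i j" using F unfolding L1_feasible_def by blast
  have znn: "\<And>i j. (i, j) \<in> A \<Longrightarrow> 0 \<le> z i j" using F unfolding L1_feasible_def by blast
  have zup: "\<And>i j. (i, j) \<in> A \<Longrightarrow> z i j \<le> (T - R A d j t) * x i j"
    using F unfolding L1_feasible_def by blast
  have zflow: "\<And>i. i \<in> S \<union> P \<Longrightarrow> (\<Sum>j\<in>out_nbrs N A i. z i j) - (\<Sum>j\<in>in_nbrs N A i. z j i)
                    = (\<Sum>j\<in>out_nbrs N A i. d i j * x i j)"
    using F unfolding L1_feasible_def by blast
  have xcons: "\<And>i. i \<in> S \<union> P \<Longrightarrow> (\<Sum>j\<in>out_nbrs N A i. x i j) - (\<Sum>j\<in>in_nbrs N A i. x j i) = 0"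
    using C unfolding common_C_def by blast
  have xin_s: "\<And>l. (l, s) \<in> A \<Longrightarrow> x l s = 0"
    using x_in_s_zero[OF I(1) I(2) C xnn] by blast
  have zz: "\<And>k l. (k, l) \<in> A \<Longrightarrow> x k l = 0 \<Longrightarrow> z k l = 0"
    using zup znn by (metis antisym mult_zero_right)
  define U where "U = {k\<in>S \<union> P. (k, t) \<notin> A\<^sup>*}"
  have jN: "j \<in> N" using ij I(2) by auto
  have "j \<noteq> t" using nr by auto
  moreover have "j \<noteq> s" using xin_s ij pos by force
  ultimately have jU: "j \<in> U" using jN nr I(6) unfolding U_def by auto
  have UN: "U \<subseteq> N" using I(6) unfolding U_def by auto
  have UU: "U \<subseteq> S \<union> P" unfolding U_def by auto
  have closed: "\<forall>k\<in>U. \<forall>l. (k, l) \<in> A \<and> l \<notin> U \<longrightarrow> z k l = 0"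
  proof (intro ballI allI impI)
    fix k l assume k: "k \<in> U" and kl: "(k, l) \<in> A \<and> l \<notin> U"
    have "x k l = 0"
    proof (rule ccontr)
      assume "x k l \<noteq> 0"
      then have xp: "x k l > 0" using xnn kl by force
      have lN: "l \<in> N" using kl I(2) by auto
      have "(l, t) \<notin> A\<^sup>*"
        using k kl converse_rtrancl_into_rtrancl[of k l A t] unfolding U_def by blast
      moreover then have "l \<noteq> t" by auto
      moreover have "l \<noteq> s" using xin_s kl xp by force
      ultimately have "l \<in> U" using lN I(6) unfolding U_def by auto
      then show False using kl by blast
    qed
    then show "z k l = 0" using zz kl by blast
  qed
  have le: "(\<Sum>k\<in>U. (\<Sum>l\<in>out_nbrs N A k. z k l) - (\<Sum>l\<in>in_nbrs N A k. z l k)) \<le> 0"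
    by (rule closed_flow[OF I(1) UN I(2) _ closed]) (use znn in blast)
  have eq: "(\<Sum>k\<in>U. (\<Sum>l\<in>out_nbrs N A k. z k l) - (\<Sum>l\<in>in_nbrs N A k. z l k))
      = (\<Sum>k\<in>U. \<Sum>l\<in>out_nbrs N A k. d k l * x k l)"
    by (rule sum.cong) (use zflow UU in auto)
  have nn: "\<forall>k\<in>U. 0 \<le> (\<Sum>l\<in>out_nbrs N A k. d k l * x k l)"
  proof
    fix k assume "k \<in> U"
    show "0 \<le> (\<Sum>l\<in>out_nbrs N A k. d k l * x k l)"
    proof (rule sum_nonneg)
      fix l assume "l \<in> out_nbrs N A k"
      then have "(k, l) \<in> A" by (simp add: out_nbrs_def)
      then show "0 \<le> d k l * x k l" using I(9) xnn by (simp add: less_imp_le)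
    qed
  qed
  have finU: "finite U" using UN I(1) finite_subset by blast
  have j_le: "(\<Sum>l\<in>out_nbrs N A j. d j l * x j l) \<le> (\<Sum>k\<in>U. \<Sum>l\<in>out_nbrs N A k. d k l * x k l)"
    using member_le_sum[of j U "\<lambda>k. \<Sum>l\<in>out_nbrs N A k. d k l * x k l"] jU nn finU by blast
  have fo: "finite (out_nbrs N A j)" using I(1) by (simp add: out_nbrs_def)
  have fi: "finite (in_nbrs N A j)" using I(1) by (simp add: in_nbrs_def)
  have "x i j \<le> (\<Sum>l\<in>in_nbrs N A j. x l j)"
  proof (rule member_le_sum[OF _ _ fi])
    show "i \<in> in_nbrs N A j" using ij I(2) by (auto simp: in_nbrs_def)
    fix l assume "l \<in> in_nbrs N A j - {i}"
    then show "0 \<le> x l j" using xnn by (simp add: in_nbrs_def)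
  qed
  also have "\<dots> = (\<Sum>l\<in>out_nbrs N A j. x j l)" using xcons[of j] jU UU by auto
  finally have "0 < (\<Sum>l\<in>out_nbrs N A j. x j l)" using pos by linarith
  then obtain l where l: "l \<in> out_nbrs N A j" "x j l > 0"
    by (metis not_less sum_nonpos)
  have jl: "(j, l) \<in> A" using l by (simp add: out_nbrs_def)
  have "0 < d j l * x j l" using I(9)[OF jl] l(2) by simp
  also have "\<dots> \<le> (\<Sum>l\<in>out_nbrs N A j. d j l * x j l)"
  proof (rule member_le_sum[OF l(1) _ fo])
    fix l' assume "l' \<in> out_nbrs N A j - {l}"
    then have "(j, l') \<in> A" by (simp add: out_nbrs_def)
    then show "0 \<le> d j l' * x j l'" using I(9) xnn by (simp add: less_imp_le)
  qed
  finally show False using j_le eq le by linarith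
qed


lemma L2_reach:
  assumes inst: "stop_instance N A s t S P p d m T"
    and F: "L2_feasible N A s t S P d m T x y f \<phi>"
    and ij: "(i, j) \<in> A" and pos: "x i j > 0" and ins: "i \<noteq> s"
  shows "(s, i) \<in> A\<^sup>*"
proof (rule ccontr)
  assume nr: "(s, i) \<notin> A\<^sup>*"
  note I = inst_facts[OF inst]
  have C: "common_C N A s t S P m x y \<phi>" using F by (simp add: L2_feasible_def)
  have xnn: "\<And>i j. (i, j) \<in> A \<Longrightarrow> 0 \<le> x i j" using F unfolding L2_feasible_def by blast
  have fnn: "\<And>i j. (i, j) \<in> A \<Longrightarrow> 0 \<le> f i j" using F unfolding L2_feasible_def by blast
  have fup: "\<And>i j. (i, j) \<in> A \<Longrightarrow> i \<noteq> s \<Longrightarrow> f i j \<le> (T - R A d s i - d i j) * x i j"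
    using F unfolding L2_feasible_def by blast
  have fs: "\<And>j. j \<in> out_nbrs N A s \<Longrightarrow> f s j = (T - d s j) * x s j"
    using F unfolding L2_feasible_def by blast
  have fflow: "\<And>i. i \<in> S \<union> P \<Longrightarrow> (\<Sum>j\<in>in_nbrs N A i. f j i) - (\<Sum>j\<in>out_nbrs N A i. f i j)
                    = (\<Sum>j\<in>out_nbrs N A i. d i j * x i j)"
    using F unfolding L2_feasible_def by blast
  have xout_t: "\<And>l. (t, l) \<in> A \<Longrightarrow> x t l = 0"
    using x_out_t_zero[OF I(1) I(2) C xnn] by blast
  have ff: "\<And>k l. (k, l) \<in> A \<Longrightarrow> x k l = 0 \<Longrightarrow> f k l = 0"
  proof -
    fix k l assume kl: "(k, l) \<in> A" and x0: "x k l = 0"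
    show "f k l = 0"
    proof (cases "k = s")
      case True
      then have "l \<in> out_nbrs N A s" using kl I(2) unfolding out_nbrs_def by blast
      then show ?thesis using fs True x0 by simp
    next
      case False
      then show ?thesis using fup[OF kl False] fnn[OF kl] x0 by simp
    qed
  qed
  define U where "U = {k\<in>S \<union> P. (s, k) \<notin> A\<^sup>*}"
  have iN: "i \<in> N" using ij I(2) by auto
  have "i \<noteq> t" using xout_t ij pos by force
  then have iU: "i \<in> U" using iN nr ins I(6) unfolding U_def by auto
  have UN: "U \<subseteq> N" using I(6) unfolding U_def by auto
  have UU: "U \<subseteq> S \<union> P" unfolding U_def by auto
  have AN': "A\<inverse> \<subseteq> N \<times> N" using I(2) by auto
  have closed: "\<forall>k\<in>U. \<forall>l. (k, l) \<in> A\<inverse> \<and> l \<notin> U \<longrightarrow> f l k = 0"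
  proof (intro ballI allI impI)
    fix k l assume k: "k \<in> U" and kl': "(k, l) \<in> A\<inverse> \<and> l \<notin> U"
    then have kl: "(l, k) \<in> A" by simp
    have "x l k = 0"
    proof (rule ccontr)
      assume "x l k \<noteq> 0"
      then have xp: "x l k > 0" using xnn kl by force
      have lN: "l \<in> N" using kl I(2) by auto
      have "(s, l) \<notin> A\<^sup>*"
        using k kl rtrancl_into_rtrancl[of s l A k] unfolding U_def by blast
      moreover then have "l \<noteq> s" by auto
      moreover have "l \<noteq> t" using xout_t kl xp by force
      ultimately have "l \<in> U" using lN I(6) unfolding U_def by auto
      then show False using kl' by blast
    qed
    then show "f l k = 0" using ff kl by blast
  qed
  have le: "(\<Sum>k\<in>U. (\<Sum>l\<in>out_nbrs N (A\<inverse>) k. f l k) - (\<Sum>l\<in>in_nbrs N (A\<inverse>) k. f k l)) \<le> 0"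
    by (rule closed_flow[OF I(1) UN AN' _ closed]) (use fnn in auto)
  have oi: "\<And>k. out_nbrs N (A\<inverse>) k = in_nbrs N A k" "\<And>k. in_nbrs N (A\<inverse>) k = out_nbrs N A k"
    by (auto simp: out_nbrs_def in_nbrs_def)
  have eq: "(\<Sum>k\<in>U. (\<Sum>l\<in>in_nbrs N A k. f l k) - (\<Sum>l\<in>out_nbrs N A k. f k l))
      = (\<Sum>k\<in>U. \<Sum>l\<in>out_nbrs N A k. d k l * x k l)"
    by (rule sum.cong) (use fflow UU in auto)
  have nn: "\<forall>k\<in>U. 0 \<le> (\<Sum>l\<in>out_nbrs N A k. d k l * x k l)"
  proof
    fix k assume "k \<in> U"
    show "0 \<le> (\<Sum>l\<in>out_nbrs N A k. d k l * x k l)"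
    proof (rule sum_nonneg)
      fix l assume "l \<in> out_nbrs N A k"
      then have "(k, l) \<in> A" by (simp add: out_nbrs_def)
      then show "0 \<le> d k l * x k l" using I(9) xnn by (simp add: less_imp_le)
    qed
  qed
  have finU: "finite U" using UN I(1) finite_subset by blast
  have i_le: "(\<Sum>l\<in>out_nbrs N A i. d i l * x i l) \<le> (\<Sum>k\<in>U. \<Sum>l\<in>out_nbrs N A k. d k l * x k l)"
    using member_le_sum[of i U "\<lambda>k. \<Sum>l\<in>out_nbrs N A k. d k l * x k l"] iU nn finU by blast
  have fo: "finite (out_nbrs N A i)" using I(1) by (simp add: out_nbrs_def)
  have jo: "j \<in> out_nbrs N A i" using ij I(2) unfolding out_nbrs_def by blast
  have "0 < d i j * x i j" using I(9)[OF ij] pos by simp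
  also have "\<dots> \<le> (\<Sum>l\<in>out_nbrs N A i. d i l * x i l)"
  proof (rule member_le_sum[OF jo _ fo])
    fix l' assume "l' \<in> out_nbrs N A i - {j}"
    then have "(i, l') \<in> A" by (simp add: out_nbrs_def)
    then show "0 \<le> d i l' * x i l'" using I(9) xnn by (simp add: less_imp_le)
  qed
  finally show False using i_le eq le oi by simp
qed


lemma L1_to_L2:
  assumes inst: "stop_instance N A s t S P p d m T"
    and F: "L1_feasible N A s t S P d m T x y z \<phi>"
  shows "L2_feasible N A s t S P d m T x y (\<lambda>i j. T * x i j - z i j) \<phi>"
proof -
  note I = inst_facts[OF inst]
  have C: "common_C N A s t S P m x y \<phi>" using F by (simp add: L1_feasible_def)
  have dpos: "\<forall>(i, j)\<in>A. d i j > 0" using inst unfolding stop_instance_def by blast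
  have xb: "\<forall>(i, j) \<in> A. 0 \<le> x i j \<and> x i j \<le> 1" using F unfolding L1_feasible_def by blast
  have yb: "\<forall>i \<in> N. 0 \<le> y i \<and> y i \<le> 1" using F unfolding L1_feasible_def by blast
  have xnn: "\<And>i j. (i, j) \<in> A \<Longrightarrow> 0 \<le> x i j" using F unfolding L1_feasible_def by blast
  have znn: "\<And>i j. (i, j) \<in> A \<Longrightarrow> 0 \<le> z i j" using F unfolding L1_feasible_def by blast
  have zup: "\<And>i j. (i, j) \<in> A \<Longrightarrow> z i j \<le> (T - R A d j t) * x i j"
    using F unfolding L1_feasible_def by blast
  have zlo: "\<And>i j. (i, j) \<in> A \<Longrightarrow> z i j \<ge> (R A d s i + d i j) * x i j"
    using F unfolding L1_feasible_def by blast
  have zs: "\<And>j. j \<in> out_nbrs N A s \<Longrightarrow> z s j = d s j * x s j"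
    using F unfolding L1_feasible_def by blast
  have zflow: "\<And>i. i \<in> S \<union> P \<Longrightarrow> (\<Sum>j\<in>out_nbrs N A i. z i j) - (\<Sum>j\<in>in_nbrs N A i. z j i)
                    = (\<Sum>j\<in>out_nbrs N A i. d i j * x i j)"
    using F unfolding L1_feasible_def by blast
  have xcons: "\<And>i. i \<in> S \<union> P \<Longrightarrow> (\<Sum>j\<in>out_nbrs N A i. x i j) - (\<Sum>j\<in>in_nbrs N A i. x j i) = 0"
    using C unfolding common_C_def by blast
  have p1: "\<forall>j \<in> out_nbrs N A s. T * x s j - z s j = (T - d s j) * x s j"
    using zs by (simp add: algebra_simps)
  have p2: "\<forall>i \<in> S \<union> P. (\<Sum>j\<in>in_nbrs N A i. T * x j i - z j i) - (\<Sum>j\<in>out_nbrs N A i. T * x i j - z i j)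
                    = (\<Sum>j\<in>out_nbrs N A i. d i j * x i j)"
  proof
    fix i assume i: "i \<in> S \<union> P"
    have "(\<Sum>j\<in>in_nbrs N A i. T * x j i - z j i) - (\<Sum>j\<in>out_nbrs N A i. T * x i j - z i j)
        = T * ((\<Sum>j\<in>in_nbrs N A i. x j i) - (\<Sum>j\<in>out_nbrs N A i. x i j))
          + ((\<Sum>j\<in>out_nbrs N A i. z i j) - (\<Sum>j\<in>in_nbrs N A i. z j i))"
      by (simp add: sum_subtractf sum_distrib_left algebra_simps)
    also have "\<dots> = (\<Sum>j\<in>out_nbrs N A i. d i j * x i j)"
      using xcons[OF i] zflow[OF i] by simp
    finally show "(\<Sum>j\<in>in_nbrs N A i. T * x j i - z j i) - (\<Sum>j\<in>out_nbrs N A i. T * x i j - z i j)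
                    = (\<Sum>j\<in>out_nbrs N A i. d i j * x i j)" .
  qed
  have p3: "\<forall>(i, j) \<in> A. i \<noteq> s \<longrightarrow> T * x i j - z i j \<le> (T - R A d s i - d i j) * x i j"
  proof (intro ballI impI)
    fix a assume "a \<in> A"
    then obtain i j where a: "a = (i, j)" "(i, j) \<in> A" by (cases a) auto
    show "case a of (i, j) \<Rightarrow> i \<noteq> s \<longrightarrow> T * x i j - z i j \<le> (T - R A d s i - d i j) * x i j"
      using zlo[OF a(2)] unfolding a(1) by (simp add: algebra_simps)
  qed
  have p4: "\<forall>(i, j) \<in> A. T * x i j - z i j \<ge> R A d j t * x i j"
  proof
    fix a assume "a \<in> A"
    then obtain i j where a: "a = (i, j)" "(i, j) \<in> A" by (cases a) auto
    show "case a of (i, j) \<Rightarrow> T * x i j - z i j \<ge> R A d j t * x i j"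
      using zup[OF a(2)] unfolding a(1) by (simp add: algebra_simps)
  qed
  have p5: "\<forall>(i, j) \<in> A. T * x i j - z i j \<ge> 0"
  proof
    fix a assume "a \<in> A"
    then obtain i j where a: "a = (i, j)" "(i, j) \<in> A" by (cases a) auto
    have "T * x i j - z i j \<ge> 0"
    proof (cases "x i j = 0")
      case True
      then have "z i j = 0" using zup[OF a(2)] znn[OF a(2)] by simp
      then show ?thesis using True by simp
    next
      case False
      then have "x i j > 0" using xnn[OF a(2)] by simp
      then have "(j, t) \<in> A\<^sup>*" using L1_reach[OF inst F a(2)] by blast
      then have "R A d j t \<ge> 0" by (rule R_nonneg[OF _ dpos])
      then have "R A d j t * x i j \<ge> 0" using xnn[OF a(2)] by (rule mult_nonneg_nonneg)
      moreover have "T * x i j - z i j \<ge> R A d j t * x i j" using zup[OF a(2)] by (simp add: algebra_simps)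
      ultimately show ?thesis by linarith
    qed
    then show "case a of (i, j) \<Rightarrow> T * x i j - z i j \<ge> 0" unfolding a(1) by simp
  qed
  show ?thesis unfolding L2_feasible_def
    by (intro conjI C p1 p2 p3 p4 p5 xb yb)
qed


lemma L2_to_L1:
  assumes inst: "stop_instance N A s t S P p d m T"
    and F: "L2_feasible N A s t S P d m T x y f \<phi>"
  shows "L1_feasible N A s t S P d m T x y (\<lambda>i j. T * x i j - f i j) \<phi>"
proof -
  note I = inst_facts[OF inst]
  have C: "common_C N A s t S P m x y \<phi>" using F by (simp add: L2_feasible_def)
  have dpos: "\<forall>(i, j)\<in>A. d i j > 0" using inst unfolding stop_instance_def by blast
  have xb: "\<forall>(i, j) \<in> A. 0 \<le> x i j \<and> x i j \<le> 1" using F unfolding L2_feasible_def by blast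
  have yb: "\<forall>i \<in> N. 0 \<le> y i \<and> y i \<le> 1" using F unfolding L2_feasible_def by blast
  have xnn: "\<And>i j. (i, j) \<in> A \<Longrightarrow> 0 \<le> x i j" using F unfolding L2_feasible_def by blast
  have fnn: "\<And>i j. (i, j) \<in> A \<Longrightarrow> 0 \<le> f i j" using F unfolding L2_feasible_def by blast
  have fup: "\<And>i j. (i, j) \<in> A \<Longrightarrow> i \<noteq> s \<Longrightarrow> f i j \<le> (T - R A d s i - d i j) * x i j"
    using F unfolding L2_feasible_def by blast
  have flo: "\<And>i j. (i, j) \<in> A \<Longrightarrow> f i j \<ge> R A d j t * x i j"
    using F unfolding L2_feasible_def by blast
  have fs: "\<And>j. j \<in> out_nbrs N A s \<Longrightarrow> f s j = (T - d s j) * x s j"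
    using F unfolding L2_feasible_def by blast
  have fflow: "\<And>i. i \<in> S \<union> P \<Longrightarrow> (\<Sum>j\<in>in_nbrs N A i. f j i) - (\<Sum>j\<in>out_nbrs N A i. f i j)
                    = (\<Sum>j\<in>out_nbrs N A i. d i j * x i j)"
    using F unfolding L2_feasible_def by blast
  have xcons: "\<And>i. i \<in> S \<union> P \<Longrightarrow> (\<Sum>j\<in>out_nbrs N A i. x i j) - (\<Sum>j\<in>in_nbrs N A i. x j i) = 0"
    using C unfolding common_C_def by blast
  have p1: "\<forall>j \<in> out_nbrs N A s. T * x s j - f s j = d s j * x s j"
    using fs by (simp add: algebra_simps)
  have p2: "\<forall>i \<in> S \<union> P. (\<Sum>j\<in>out_nbrs N A i. T * x i j - f i j) - (\<Sum>j\<in>in_nbrs N A i. T * x j i - f j i)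
                    = (\<Sum>j\<in>out_nbrs N A i. d i j * x i j)"
  proof
    fix i assume i: "i \<in> S \<union> P"
    have "(\<Sum>j\<in>out_nbrs N A i. T * x i j - f i j) - (\<Sum>j\<in>in_nbrs N A i. T * x j i - f j i)
        = T * ((\<Sum>j\<in>out_nbrs N A i. x i j) - (\<Sum>j\<in>in_nbrs N A i. x j i))
          + ((\<Sum>j\<in>in_nbrs N A i. f j i) - (\<Sum>j\<in>out_nbrs N A i. f i j))"
      by (simp add: sum_subtractf sum_distrib_left algebra_simps)
    also have "\<dots> = (\<Sum>j\<in>out_nbrs N A i. d i j * x i j)"
      using xcons[OF i] fflow[OF i] by simp
    finally show "(\<Sum>j\<in>out_nbrs N A i. T * x i j - f i j) - (\<Sum>j\<in>in_nbrs N A i. T * x j i - f j i)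
                    = (\<Sum>j\<in>out_nbrs N A i. d i j * x i j)" .
  qed
  have p3: "\<forall>(i, j) \<in> A. T * x i j - f i j \<le> (T - R A d j t) * x i j"
  proof
    fix a assume "a \<in> A"
    then obtain i j where a: "a = (i, j)" "(i, j) \<in> A" by (cases a) auto
    show "case a of (i, j) \<Rightarrow> T * x i j - f i j \<le> (T - R A d j t) * x i j"
      using flo[OF a(2)] unfolding a(1) by (simp add: algebra_simps)
  qed
  have lo: "T * x i j - f i j \<ge> (R A d s i + d i j) * x i j \<and> T * x i j - f i j \<ge> 0"
    if a: "(i, j) \<in> A" for i j
  proof (cases "i = s")
    case True
    then have jo: "j \<in> out_nbrs N A s" using a I(2) unfolding out_nbrs_def by blast
    have R0: "R A d s s = 0" by (simp add: R_def)
    have e: "T * x i j - f i j = d i j * x i j" using fs[OF jo] True by (simp add: algebra_simps)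
    have "d i j * x i j \<ge> 0" using I(9)[OF a] xnn[OF a] by simp
    then show ?thesis using e R0 True by simp
  next
    case False
    have e1: "T * x i j - f i j \<ge> (R A d s i + d i j) * x i j"
      using fup[OF a False] by (simp add: algebra_simps)
    have "(R A d s i + d i j) * x i j \<ge> 0"
    proof (cases "x i j = 0")
      case True then show ?thesis by simp
    next
      case False2: False
      then have xp: "x i j > 0" using xnn[OF a] by simp
      then have "(s, i) \<in> A\<^sup>*" using L2_reach[OF inst F a xp False] by blast
      then have "R A d s i \<ge> 0" by (rule R_nonneg[OF _ dpos])
      moreover have "d i j > 0" using I(9)[OF a] .
      ultimately have "R A d s i + d i j \<ge> 0" by simp
      then show ?thesis using xnn[OF a] by (rule mult_nonneg_nonneg)
    qed
    then show ?thesis using e1 by linarith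
  qed
  have p4: "\<forall>(i, j) \<in> A. T * x i j - f i j \<ge> (R A d s i + d i j) * x i j"
    using lo by blast
  have p5: "\<forall>(i, j) \<in> A. T * x i j - f i j \<ge> 0"
    using lo by blast
  show ?thesis unfolding L1_feasible_def
    by (intro conjI C p1 p2 p3 p4 p5 xb yb)
qed


theorem theorem1:
  fixes N :: "'a set" and A :: "('a \<times> 'a) set" and s t :: 'a and S P :: "'a set"
    and p :: "'a \<Rightarrow> int" and d :: "'a \<Rightarrow> 'a \<Rightarrow> real" and m :: nat and T :: real
  assumes "stop_instance N A s t S P p d m T"
  shows "(\<forall>x y z \<phi>. L1_feasible N A s t S P d m T x y z \<phi> \<longrightarrow>
            (\<exists>f. L2_feasible N A s t S P d m T x y f \<phi>))
       \<and> (\<forall>x y f \<phi>. L2_feasible N A s t S P d m T x y f \<phi> \<longrightarrow>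
            (\<exists>z. L1_feasible N A s t S P d m T x y z \<phi>))
       \<and> (SUP (x, y, z, \<phi>) \<in> {(x, y, z, \<phi>). L1_feasible N A s t S P d m T x y z \<phi>}. objective P p y)
         = (SUP (x, y, f, \<phi>) \<in> {(x, y, f, \<phi>). L2_feasible N A s t S P d m T x y f \<phi>}. objective P p y)"
proof -
  have h1: "\<forall>x y z \<phi>. L1_feasible N A s t S P d m T x y z \<phi> \<longrightarrow>
            (\<exists>f. L2_feasible N A s t S P d m T x y f \<phi>)"
    using L1_to_L2[OF assms] by blast
  have h2: "\<forall>x y f \<phi>. L2_feasible N A s t S P d m T x y f \<phi> \<longrightarrow>
            (\<exists>z. L1_feasible N A s t S P d m T x y z \<phi>)"
    using L2_to_L1[OF assms] by blast
  have img: "(\<lambda>(x, y, z, \<phi>). objective P p y) ` {(x, y, z, \<phi>). L1_feasible N A s t S P d m T x y z \<phi>}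
      = (\<lambda>(x, y, f, \<phi>). objective P p y) ` {(x, y, f, \<phi>). L2_feasible N A s t S P d m T x y f \<phi>}"
  proof (rule equalityI; rule subsetI)
    fix v assume "v \<in> (\<lambda>(x, y, z, \<phi>). objective P p y) ` {(x, y, z, \<phi>). L1_feasible N A s t S P d m T x y z \<phi>}"
    then obtain x y z \<phi> where v: "v = objective P p y" and F: "L1_feasible N A s t S P d m T x y z \<phi>"
      by auto
    obtain f where "L2_feasible N A s t S P d m T x y f \<phi>" using h1 F by blast
    then have "(x, y, f, \<phi>) \<in> {(x, y, f, \<phi>). L2_feasible N A s t S P d m T x y f \<phi>}" by simp
    then show "v \<in> (\<lambda>(x, y, f, \<phi>). objective P p y) ` {(x, y, f, \<phi>). L2_feasible N A s t S P d m T x y f \<phi>}"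
      unfolding v by (rule rev_image_eqI) simp
  next
    fix v assume "v \<in> (\<lambda>(x, y, f, \<phi>). objective P p y) ` {(x, y, f, \<phi>). L2_feasible N A s t S P d m T x y f \<phi>}"
    then obtain x y f \<phi> where v: "v = objective P p y" and F: "L2_feasible N A s t S P d m T x y f \<phi>"
      by auto
    obtain z where "L1_feasible N A s t S P d m T x y z \<phi>" using h2 F by blast
    then have "(x, y, z, \<phi>) \<in> {(x, y, z, \<phi>). L1_feasible N A s t S P d m T x y z \<phi>}" by simp
    then show "v \<in> (\<lambda>(x, y, z, \<phi>). objective P p y) ` {(x, y, z, \<phi>). L1_feasible N A s t S P d m T x y z \<phi>}"
      unfolding v by (rule rev_image_eqI) simp
  qed
  show ?thesis using h1 h2 img by simp
qed

end
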